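(* Let $0<a\le1$, $H=T^a$, and let $f$ be a real-valued even function with $\hat f\in C_c^\infty(\mathbb{R})$ and $\operatorname{supp}\hat f\subset(-a,a)$. Let $w\ge0$ with $\int w=1$ and $\hat w$ compactly supported. Then, as $T\to\infty$, $$\langle (N_f^{\mathrm{osc}})^2\rangle_{T,H}=\int_{-\infty}^\infty\min(|u|,1)\,\hat f(u)^2\,du+O\Big(\frac1{\log T}\Big).$$
   Context: $\hat f(u)=\int f(x)e^{-2\pi ixu}\,dx$. $\Lambda$ is the von Mangoldt function. For real $\tau$, $$N_f^{\mathrm{osc}}(\tau)=-\frac{1}{\log T}\sum_{n\ge2}\frac{\Lambda(n)}{\sqrt n}\hat f\Big(\frac{\log n}{\log T}\Big)\big(e^{i\tau\log n}+e^{-i\tau\log n}\big).$$ For a function $W$ of $\tau$, $\langle W\rangle_{T,H}=\int_{-\infty}^\infty W(\tau)w\big(\frac{\tau-T}{H}\big)\frac{d\tau}{H}$. *)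

theory Defs
  imports "HOL-Analysis.Analysis" "HOL-Number_Theory.Prime_Powers" "HOL-Library.Landau_Symbols"
begin

definition fourier :: "(real \<Rightarrow> real) \<Rightarrow> real \<Rightarrow> complex" where
  "fourier f u = (LINT x|lborel. complex_of_real (f x) * cis (- 2 * pi * x * u))"

definition smooth_fun :: "(real \<Rightarrow> complex) \<Rightarrow> bool" where
  "smooth_fun g \<longleftrightarrow> (\<exists>D. D 0 = g \<and> (\<forall>k x. (D k has_vector_derivative D (Suc k) x) (at x)))"

definition fsupp :: "(real \<Rightarrow> complex) \<Rightarrow> real set" where
  "fsupp g = closure {u. g u \<noteq> 0}"

definition N_osc :: "(real \<Rightarrow> real) \<Rightarrow> real \<Rightarrow> real \<Rightarrow> complex" where
  "N_osc f T \<tau> = - complex_of_real (1 / ln T) *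
     (\<Sum>n. if n \<ge> 2 then complex_of_real (mangoldt n / sqrt (real n))
            * fourier f (ln (real n) / ln T)
            * (cis (\<tau> * ln (real n)) + cis (- \<tau> * ln (real n))) else 0)"

definition wavg :: "(real \<Rightarrow> real) \<Rightarrow> (real \<Rightarrow> complex) \<Rightarrow> real \<Rightarrow> real \<Rightarrow> complex" where
  "wavg w W T H = (LINT \<tau>|lborel. W \<tau> * complex_of_real (w ((\<tau> - T) / H) / H))"

end

theory Submission
  imports Defs
begin


definition psi :: "nat \<Rightarrow> real" where "psi N = (\<Sum>d=1..N. mangoldt d)"
definition lnf :: "nat \<Rightarrow> real" where "lnf N = (\<Sum>k=1..N. ln (real k))"
definition mert :: "nat \<Rightarrow> real" where "mert N = (\<Sum>d=1..N. mangoldt d / real d)"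

lemma lnf_mangoldt: "lnf N = (\<Sum>d=1..N. mangoldt d * real (N div d))"
proof (induction N)
  case 0 show ?case by (simp add: lnf_def)
next
  case (Suc N)
  have "(\<Sum>d=1..Suc N. mangoldt d * real (Suc N div d)) =
        (\<Sum>d=1..Suc N. mangoldt d * real (N div d) + (if d dvd Suc N then mangoldt d else 0))"
    by (intro sum.cong refl) (auto simp: div_Suc mod_eq_0_iff_dvd algebra_simps)
  also have "\<dots> = (\<Sum>d=1..Suc N. mangoldt d * real (N div d)) + (\<Sum>d=1..Suc N. if d dvd Suc N then mangoldt d else 0)"
    by (rule sum.distrib)
  also have "(\<Sum>d=1..Suc N. mangoldt d * real (N div d)) = (\<Sum>d=1..N. mangoldt d * real (N div d))"
    by simp
  also have "(\<Sum>d=1..Suc N. if d dvd Suc N then mangoldt d else 0) = (\<Sum>d | d dvd Suc N. mangoldt d)"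
  proof -
    have "{d. d dvd Suc N} = {d\<in>{1..Suc N}. d dvd Suc N}"
      by (auto intro: dvd_imp_le) (metis Suc_leI dvd_0_left_iff nat.distinct(1) neq0_conv)
    then show ?thesis by (metis (no_types) finite_atLeastAtMost sum.inter_filter)
  qed
  also have "\<dots> = ln (real (Suc N))" using mangoldt_sum[of "Suc N", where ?'a = real] by simp
  finally show ?case using Suc by (simp add: lnf_def)
qed

lemma lnf_upper: "lnf N \<le> real N * ln (real N)"
proof -
  have "lnf N \<le> (\<Sum>k=1..N. ln (real N))"
    unfolding lnf_def by (intro sum_mono) auto
  then show ?thesis by simp
qed

lemma lnf_lower: "N \<ge> 1 \<Longrightarrow> real N * ln (real N) - real N + 1 \<le> lnf N"
proof (induction N rule: nat_induct_at_least)
  case base then show ?case by (simp add: lnf_def)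
next
  case (Suc N)
  have N: "real N \<ge> 1" using Suc by simp
  have e: "ln (real (Suc N)) = ln (real N) + ln (1 + 1 / real N)"
    using N by (simp add: ln_div field_simps)
  have l: "ln (1 + 1 / real N) \<le> 1 / real N" using N by (intro ln_add_one_self_le_self) auto
  have "real N * ln (1 + 1 / real N) \<le> 1" using mult_left_mono[OF l, of "real N"] N by simp
  have "lnf (Suc N) = lnf N + ln (real (Suc N))" by (simp add: lnf_def)
  then show ?case using Suc.IH \<open>real N * ln (1 + 1 / real N) \<le> 1\<close> e
    by (simp add: algebra_simps)
qed

lemma psi_mono: "M \<le> N \<Longrightarrow> psi M \<le> psi N"
  unfolding psi_def by (intro sum_mono2) (auto simp: mangoldt_nonneg)

lemma psi_double: "psi (2*N) - psi N \<le> 4 * real N"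
proof (cases "N = 0")
  case True then show ?thesis by (simp add: psi_def)
next
  case False
  have split: "{1..2*N} = {1..N} \<union> {N+1..2*N}" by auto
  have disj: "{1..N} \<inter> {N+1..2*N} = {}" by auto
  have "psi (2*N) - psi N = (\<Sum>d=N+1..2*N. mangoldt d)"
    unfolding psi_def split by (subst sum.union_disjoint) auto
  also have "\<dots> = (\<Sum>d=N+1..2*N. mangoldt d * (real ((2*N) div d) - 2 * real (N div d)))"
  proof (intro sum.cong refl)
    fix d assume d: "d \<in> {N+1..2*N}"
    then have "(2*N) div d = 1" by (auto intro!: div_nat_eqI)
    moreover have "N div d = 0" using d by auto
    ultimately show "mangoldt d = mangoldt d * (real ((2*N) div d) - 2 * real (N div d))" by simp
  qed
  also have "\<dots> \<le> (\<Sum>d=1..2*N. mangoldt d * (real ((2*N) div d) - 2 * real (N div d)))"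
  proof (intro sum_mono2)
    fix d
    have "2 * (N div d) \<le> (2*N) div d"
      by (metis add_self_div_2 div_mult2_eq div_times_less_eq_dividend mult_2 mult_2_right)
    then show "0 \<le> mangoldt d * (real ((2*N) div d) - 2 * real (N div d))"
      by (intro mult_nonneg_nonneg mangoldt_nonneg) linarith
  qed auto
  also have "\<dots> = lnf (2*N) - 2 * (\<Sum>d=1..2*N. mangoldt d * real (N div d))"
    by (simp add: lnf_mangoldt algebra_simps sum_subtractf sum_distrib_left)
  also have "(\<Sum>d=1..2*N. mangoldt d * real (N div d)) = lnf N"
    unfolding lnf_mangoldt split by (subst sum.union_disjoint) auto
  also have "lnf (2*N) - 2 * lnf N \<le> real (2*N) * ln (real (2*N)) - 2 * (real N * ln (real N) - real N + 1)"
    using lnf_upper[of "2*N"] lnf_lower[of N] False by simp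
  also have "\<dots> \<le> 4 * real N"
  proof -
    have "ln (real (2*N)) = ln 2 + ln (real N)" using False by (simp add: ln_mult)
    moreover have "ln (2::real) \<le> 1" using ln_2_less_1 by simp
    moreover have "real N * ln 2 \<le> real N * 1" by (intro mult_left_mono) (use \<open>ln (2::real) \<le> 1\<close> in auto)
    ultimately have "real (2*N) * ln (real (2*N)) = 2 * real N * ln 2 + 2 * real N * ln (real N)"
      by (simp add: algebra_simps)
    then show ?thesis using \<open>real N * ln 2 \<le> real N * 1\<close> by simp
  qed
  finally show ?thesis .
qed

lemma psi_le: "psi N \<le> 8 * real N"
proof (induction N rule: less_induct)
  case (less N)
  have "N = 0 \<or> N = 1 \<or> (\<exists>M. N = 2*M \<and> M \<ge> 1) \<or> (\<exists>M. N = 2*M+1 \<and> M \<ge> 1)" by presburger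
  then consider "N = 0" | "N = 1" | M where "N = 2*M" "M \<ge> 1" | M where "N = 2*M+1" "M \<ge> 1"
    by blast
  then show ?case
  proof cases
    case 1 then show ?thesis by (simp add: psi_def)
  next
    case 2 then show ?thesis by (simp add: psi_def)
  next
    case 3
    have "psi M \<le> 8 * real M" using less 3 by auto
    then show ?thesis using psi_double[of M] 3 by simp
  next
    case 4
    have "psi (M+1) \<le> 8 * real (M+1)" using less.IH[of "M+1"] 4 by simp
    moreover have "psi N \<le> psi (2*(M+1))" using 4 by (intro psi_mono) auto
    ultimately show ?thesis using psi_double[of "M+1"] 4 by simp
  qed
qed

lemma mert_nat: assumes "N \<ge> 1"
  shows "ln (real N) - 1 \<le> mert N" "mert N \<le> ln (real N) + 8"
proof -
  have N: "real N \<ge> 1" using assms by simp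
  have "lnf N \<le> (\<Sum>d=1..N. mangoldt d * (real N / real d))"
    unfolding lnf_mangoldt
  proof (intro sum_mono mult_left_mono mangoldt_nonneg)
    fix d assume d: "d \<in> {1..N}"
    have "real (N div d) * real d \<le> real N"
      by (metis of_nat_le_iff of_nat_mult div_times_less_eq_dividend)
    then show "real (N div d) \<le> real N / real d" using d by (simp add: field_simps)
  qed
  also have "\<dots> = real N * mert N"
    unfolding mert_def sum_distrib_left by (intro sum.cong refl) simp
  finally have 1: "lnf N \<le> real N * mert N" .
  have "real N * mert N - psi N = (\<Sum>d=1..N. mangoldt d * (real N / real d - 1))"
    by (simp add: mert_def psi_def sum_distrib_left sum_subtractf algebra_simps)
  also have "\<dots> \<le> lnf N"
    unfolding lnf_mangoldt
  proof (intro sum_mono mult_left_mono mangoldt_nonneg)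
    fix d assume d: "d \<in> {1..N}"
    have "real N < real d * (real (N div d) + 1)"
    proof -
      have m: "N mod d < d" using d by simp
      have "d * (N div d + 1) = d*(N div d) + d" by simp
      then have "N < d * (N div d + 1)" using mult_div_mod_eq[of d N] m by linarith
      then show ?thesis by (metis of_nat_add of_nat_less_iff of_nat_mult of_nat_1)
    qed
    then show "real N / real d - 1 \<le> real (N div d)" using d
      by (simp add: field_simps)
  qed
  finally have 2: "real N * mert N - psi N \<le> lnf N" .
  show "ln (real N) - 1 \<le> mert N"
  proof -
    have "real N * (ln (real N) - 1) \<le> real N * mert N"
      using 1 lnf_lower[OF assms] by (simp add: algebra_simps)
    then show ?thesis using N by (simp add: mult_le_cancel_left)
  qed
  show "mert N \<le> ln (real N) + 8"
  proof -
    have "real N * mert N \<le> real N * (ln (real N) + 8)"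
      using 2 lnf_upper[of N] psi_le[of N] by (simp add: algebra_simps)
    then show ?thesis using N by (simp add: mult_le_cancel_left)
  qed
qed

lemma mert_real: assumes "x \<ge> 1" shows "\<bar>mert (nat \<lfloor>x\<rfloor>) - ln x\<bar> \<le> 9"
proof -
  define N where "N = nat \<lfloor>x\<rfloor>"
  have N1: "N \<ge> 1" using assms by (simp add: N_def le_nat_iff)
  have Nx: "real N \<le> x" "x < real N + 1" using assms by (simp_all add: N_def)
  have "ln (real N) \<le> ln x" using Nx N1 by simp
  moreover have "ln x \<le> ln (2 * real N)" using Nx N1 by simp
  moreover have "ln (2 * real N) = ln 2 + ln (real N)" using N1 by (simp add: ln_mult)
  moreover have "ln (2::real) \<le> 1" using ln_2_less_1 by simp
  ultimately show ?thesis using mert_nat[OF N1] unfolding N_def[symmetric] by linarith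
qed

definition pp :: "nat \<Rightarrow> real" where "pp n = mangoldt n * (ln (real n) - mangoldt n) / real n"

lemma pp_nonneg: "pp n \<ge> 0"
proof (cases "n = 0")
  case False
  then show ?thesis unfolding pp_def using mangoldt_le[of n] mangoldt_nonneg[of n]
    by (intro divide_nonneg_nonneg mult_nonneg_nonneg) auto
qed (simp add: pp_def)

lemma harm_le_ln: "n \<ge> 1 \<Longrightarrow> harm n \<le> ln (real n) + 1"
proof -
  assume n: "n \<ge> 1"
  have "harm (Suc (n-1)) - ln (real (Suc (n-1))) \<le> harm (Suc 0) - ln (real (Suc 0))"
    using decseq_harm_diff_ln unfolding monotone_on_def by (metis UNIV_I le0)
  then show ?thesis using n by (simp add: harm_expand)
qed

lemma ln_sq_le: assumes "x \<ge> (1::real)" shows "ln x ^ 2 \<le> 4 * x"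
proof -
  have s: "sqrt x \<ge> 1" using assms by simp
  have "ln x = 2 * ln (sqrt x)" using assms by (simp add: ln_sqrt)
  also have "\<dots> \<le> 2 * sqrt x" using ln_le_minus_one[of "sqrt x"] s by simp
  finally have "ln x \<le> 2 * sqrt x" .
  moreover have "ln x \<ge> 0" using assms by simp
  ultimately have "ln x ^ 2 \<le> (2 * sqrt x) ^ 2" by (intro power_mono) auto
  also have "\<dots> = 4 * x" using assms by (simp add: power_mult_distrib)
  finally show ?thesis .
qed

lemma geo34: "(\<Sum>k=2..N. (3/4::real) ^ (k-2)) \<le> 4"
proof -
  have "N \<ge> 1 \<Longrightarrow> (\<Sum>k=2..N. (3/4::real) ^ (k-2)) \<le> 4 - 4 * (3/4) ^ (N-1)" for N
  proof (induction N rule: nat_induct_at_least)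
    case base then show ?case by simp
  next
    case (Suc N)
    have "(\<Sum>k=2..Suc N. (3/4::real) ^ (k-2)) = (\<Sum>k=2..N. (3/4::real) ^ (k-2)) + (3/4) ^ (N-1)"
      using Suc by (simp add: Suc_diff_le numeral_2_eq_2)
    also have "\<dots> \<le> 4 - 4 * (3/4) ^ (N-1) + (3/4) ^ (N-1)" using Suc by simp
    also have "\<dots> = 4 - 4 * (3/4) ^ (Suc N - 1)"
      using Suc by (cases N) auto
    finally show ?case .
  qed
  moreover have "(3/4::real) ^ (N-1) \<ge> 0" by simp
  ultimately show ?thesis
  proof (cases "N = 0")
    case False then have "N \<ge> 1" by simp
    have "(\<Sum>k=2..N. (3/4::real) ^ (k-2)) \<le> 4 - 4 * (3/4) ^ (N-1)"
      using \<open>N \<ge> 1\<close> \<open>\<And>N. N \<ge> 1 \<Longrightarrow> _\<close> by blast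
    then show ?thesis using \<open>(3/4::real) ^ (N-1) \<ge> 0\<close> by linarith
  qed simp
qed

lemma pk_term: assumes "p \<ge> (2::real)" "k \<ge> 2"
  shows "real (k-1) / p ^ k \<le> 2 * (3/4) ^ (k-2) / p^2"
proof -
  obtain j where k: "k = j + 2" using assms by (metis add.commute le_Suc_ex)
  have b: "1 + real j * (1/2) \<le> (1 + 1/2::real) ^ j" by (rule Bernoulli_inequality) simp
  have kj: "real (k-1) \<le> 2 * (3/2) ^ j" using b k by simp
  have pj: "(2::real) ^ j \<le> p ^ j" using assms by (intro power_mono) auto
  have "real (k-1) / p ^ k = real (k-1) / (p^2 * p ^ j)" using k by (simp add: power_add power2_eq_square)
  also have "\<dots> \<le> 2 * (3/2) ^ j / (p^2 * 2 ^ j)"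
    using assms kj pj by (intro frac_le mult_left_mono) auto
  also have "\<dots> = 2 * (3/4) ^ j / p^2"
    by (simp add: power_divide power_mult_distrib[symmetric])
  finally show ?thesis using k by simp
qed

lemma pp_sum_bound: assumes "N \<ge> 1" shows "(\<Sum>n=1..N. pp n) \<le> 32 * (ln (real N) + 1)"
proof -
  define P where "P = {p\<in>{1..N}. prime p}"
  define K where "K = {2..N}"
  define A where "A = {n\<in>{1..N}. pp n \<noteq> 0}"
  have "(\<Sum>n=1..N. pp n) = (\<Sum>n\<in>A. pp n)"
    unfolding A_def by (intro sum.mono_neutral_right) auto
  also have "\<dots> \<le> (\<Sum>n\<in>(\<lambda>(p,k). p ^ k) ` (P \<times> K). pp n)"
  proof (intro sum_mono2)
    show "finite ((\<lambda>(p,k). p ^ k) ` (P \<times> K))" unfolding P_def K_def by auto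
    show "A \<subseteq> (\<lambda>(p,k). p ^ k) ` (P \<times> K)"
    proof
      fix n assume n: "n \<in> A"
      then have "mangoldt n \<noteq> (0::real)" unfolding A_def pp_def by auto
      then have "primepow n" unfolding mangoldt_def by (auto split: if_splits)
      then obtain p k where pk: "prime p" "k > 0" "n = p ^ k" unfolding primepow_def by auto
      have "k \<noteq> 1"
      proof
        assume "k = 1"
        then have "pp n = 0" using pk by (simp add: pp_def)
        then show False using n unfolding A_def by auto
      qed
      then have k2: "k \<ge> 2" using pk by auto
      have nN: "n \<le> N" using n unfolding A_def by auto
      have p2: "p \<ge> 2" using pk prime_ge_2_nat by auto
      have "p \<le> p ^ k" using pk p2 by (simp add: self_le_power)
      moreover have "k < 2 ^ k" by (rule less_exp)
      moreover have "2 ^ k \<le> p ^ k" using p2 by (intro power_mono) auto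
      ultimately have "k \<le> N" using pk nN by linarith
      then have "p \<in> P" "k \<in> K" using pk nN p2 k2 \<open>p \<le> p ^ k\<close> unfolding P_def K_def by auto
      then show "n \<in> (\<lambda>(p,k). p ^ k) ` (P \<times> K)" using pk by auto
    qed
  qed (auto simp: pp_nonneg)
  also have "\<dots> \<le> (\<Sum>(p,k)\<in>P \<times> K. pp (p ^ k))"
    by (rule order.trans[OF sum_image_le]) (auto simp: P_def K_def pp_nonneg case_prod_unfold)
  also have "\<dots> = (\<Sum>p\<in>P. \<Sum>k\<in>K. pp (p ^ k))"
    by (rule sum.cartesian_product[symmetric])
  also have "\<dots> \<le> (\<Sum>p\<in>P. 32 / real p)"
  proof (intro sum_mono)
    fix p assume p: "p \<in> P"
    then have pr: "prime p" and p2: "real p \<ge> 2" unfolding P_def using prime_ge_2_nat by auto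
    have "(\<Sum>k\<in>K. pp (p ^ k)) = (\<Sum>k\<in>K. ln (real p) ^ 2 * (real (k-1) / real p ^ k))"
    proof (intro sum.cong refl)
      fix k assume "k \<in> K"
      then have k: "k \<ge> 2" unfolding K_def by auto
      have "ln (real (p ^ k)) = real k * ln (real p)" using p2 by (simp add: ln_realpow)
      then show "pp (p ^ k) = ln (real p) ^ 2 * (real (k-1) / real p ^ k)"
        using pr k by (simp add: pp_def power2_eq_square of_nat_diff algebra_simps)
    qed
    also have "\<dots> \<le> (\<Sum>k\<in>K. ln (real p) ^ 2 * (2 * (3/4) ^ (k-2) / real p ^ 2))"
      using pk_term[OF p2] unfolding K_def by (intro sum_mono mult_left_mono) auto
    also have "\<dots> = ln (real p) ^ 2 * 2 / real p ^ 2 * (\<Sum>k\<in>K. (3/4) ^ (k-2))"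
      by (simp add: sum_distrib_left sum_divide_distrib algebra_simps)
    also have "\<dots> \<le> ln (real p) ^ 2 * 2 / real p ^ 2 * 4"
      unfolding K_def by (intro mult_left_mono geo34) auto
    also have "\<dots> \<le> (4 * real p) * 2 / real p ^ 2 * 4"
      using ln_sq_le[of "real p"] p2 by (intro mult_right_mono divide_right_mono) auto
    also have "\<dots> = 32 / real p" using p2 by (simp add: power2_eq_square)
    finally show "(\<Sum>k\<in>K. pp (p ^ k)) \<le> 32 / real p" .
  qed
  also have "\<dots> \<le> (\<Sum>m=1..N. 32 / real m)"
    unfolding P_def by (intro sum_mono2) auto
  also have "\<dots> = 32 * harm N" by (simp add: harm_def sum_distrib_left divide_inverse)
  also have "\<dots> \<le> 32 * (ln (real N) + 1)" using harm_le_ln[OF assms] by simp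
  finally show ?thesis .
qed



lemma cont_bound: assumes "continuous_on {a..b} (h :: real \<Rightarrow> 'a::real_normed_vector)"
  obtains B where "B > 0" "\<And>u. u \<in> {a..b} \<Longrightarrow> norm (h u) \<le> B"
proof -
  have "compact (h ` {a..b})" by (intro compact_continuous_image assms) auto
  then have "bounded (h ` {a..b})" by (rule compact_imp_bounded)
  then show ?thesis using that unfolding bounded_pos by auto
qed

lemma ftc_trick:
  fixes \<phi> \<phi>' :: "real \<Rightarrow> 'a::banach" and c t :: "nat \<Rightarrow> real"
  assumes "b \<ge> 0" "finite S" "\<And>n. n \<in> S \<Longrightarrow> 0 \<le> t n \<and> t n \<le> b"
    and "\<And>x. (\<phi> has_vector_derivative \<phi>' x) (at x)" "\<phi> b = 0"
  shows "((\<lambda>u. (\<Sum>n\<in>S. if t n \<le> u then c n else 0) *\<^sub>R \<phi>' u) has_integral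
           - (\<Sum>n\<in>S. c n *\<^sub>R \<phi> (t n))) {0..b}"
proof -
  have each: "((\<lambda>u. (if t n \<le> u then c n else 0) *\<^sub>R \<phi>' u) has_integral - (c n *\<^sub>R \<phi> (t n))) {0..b}"
    if n: "n \<in> S" for n
  proof -
    have tn: "0 \<le> t n" "t n \<le> b" using assms(3)[OF n] by auto
    have "(\<phi>' has_integral (\<phi> b - \<phi> (t n))) {t n..b}"
      using tn by (intro fundamental_theorem_of_calculus) (auto intro: has_vector_derivative_at_within assms(4))
    then have "((\<lambda>x. if x \<in> cbox (t n) b then \<phi>' x else 0) has_integral (- \<phi> (t n))) (cbox 0 b)"
      using tn assms(5) by (intro has_integral_restrict_closed_subinterval) auto
    then have "((\<lambda>x. c n *\<^sub>R (if x \<in> cbox (t n) b then \<phi>' x else 0)) has_integral c n *\<^sub>R (- \<phi> (t n))) (cbox 0 b)"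
      by (rule has_integral_cmul)
    then show ?thesis
      by (subst has_integral_cong[where g="\<lambda>x. c n *\<^sub>R (if x \<in> cbox (t n) b then \<phi>' x else 0)"]) auto
  qed
  have "((\<lambda>u. \<Sum>n\<in>S. (if t n \<le> u then c n else 0) *\<^sub>R \<phi>' u) has_integral (\<Sum>n\<in>S. - (c n *\<^sub>R \<phi> (t n)))) {0..b}"
    using each assms(2) by (intro has_integral_sum) auto
  then show ?thesis by (simp add: scaleR_sum_left sum_negf)
qed

lemma ln_le_iff_le_exp: "0 < (x::real) \<Longrightarrow> ln x \<le> y \<longleftrightarrow> x \<le> exp y"
proof -
  assume x: "0 < x"
  have "ln x \<le> y \<longleftrightarrow> exp (ln x) \<le> exp y" by (rule exp_le_cancel_iff[symmetric])
  then show ?thesis using x by simp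
qed

lemma nat_le_floor_iff: "x \<ge> 0 \<Longrightarrow> (n \<le> nat \<lfloor>x\<rfloor>) \<longleftrightarrow> real n \<le> x"
  by (simp add: le_nat_iff le_floor_iff)

lemma mert_from2: "mert M = (\<Sum>d=2..M. mangoldt d / real d)"
proof (cases "M = 0")
  case False
  then show ?thesis unfolding mert_def
    by (subst sum.atLeast_Suc_atMost) (auto simp: numeral_2_eq_2)
qed (simp add: mert_def)

lemma nt_main:
  fixes g g' :: "real \<Rightarrow> complex" and b :: real
  assumes b: "b > 0" and dg: "\<And>x. (g has_vector_derivative g' x) (at x)"
    and cg': "continuous_on {0..b} g'" and gb: "g b = 0"
  shows "\<exists>C. \<forall>L\<ge>1. norm ((\<Sum>n=2..nat \<lfloor>exp (b*L)\<rfloor>. (mangoldt n ^ 2 / real n) *\<^sub>R g (ln (real n) / L))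
            - L^2 *\<^sub>R integral {0..b} (\<lambda>u. u *\<^sub>R g u)) \<le> C * L"
proof -
  define \<phi> where "\<phi> u = u *\<^sub>R g u" for u
  define \<phi>' where "\<phi>' u = u *\<^sub>R g' u + g u" for u
  have d\<phi>: "(\<phi> has_vector_derivative \<phi>' x) (at x)" for x
  proof -
    have "((\<lambda>x. x *\<^sub>R g x) has_vector_derivative (x *\<^sub>R g' x + 1 *\<^sub>R g x)) (at x)"
      by (rule has_vector_derivative_scaleR) (auto intro!: derivative_eq_intros dg)
    then show ?thesis unfolding \<phi>_def[abs_def] \<phi>'_def by simp
  qed
  have cg: "continuous_on {0..b} g"
    using dg by (intro continuous_at_imp_continuous_on ballI has_vector_derivative_continuous) auto
  have c\<phi>: "continuous_on {0..b} \<phi>" unfolding \<phi>_def using cg by (intro continuous_intros)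
  have c\<phi>': "continuous_on {0..b} \<phi>'" unfolding \<phi>'_def using cg cg' by (intro continuous_intros)
  obtain Bg where Bg: "Bg > 0" "\<And>u. u \<in> {0..b} \<Longrightarrow> norm (g u) \<le> Bg" using cont_bound[OF cg] by blast
  obtain Bd where Bd: "Bd > 0" "\<And>u. u \<in> {0..b} \<Longrightarrow> norm (\<phi>' u) \<le> Bd" using cont_bound[OF c\<phi>'] by blast
  define J where "J = integral {0..b} \<phi>"
  have hJ: "(\<phi> has_integral J) {0..b}" unfolding J_def using c\<phi> by (intro integrable_integral integrable_continuous_interval)
  have parts: "((\<lambda>u. u *\<^sub>R \<phi>' u) has_integral - J) {0..b}"
  proof -
    have "((\<lambda>u. u *\<^sub>R \<phi>' u + 1 *\<^sub>R \<phi> u) has_integral (b *\<^sub>R \<phi> b - 0 *\<^sub>R \<phi> 0)) {0..b}"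
    proof (rule fundamental_theorem_of_calculus)
      fix x :: real
      have "((\<lambda>u. u *\<^sub>R \<phi> u) has_vector_derivative x *\<^sub>R \<phi>' x + 1 *\<^sub>R \<phi> x) (at x)"
        by (rule has_vector_derivative_scaleR[OF _ d\<phi>]) (rule DERIV_ident)
      then show "((\<lambda>u. u *\<^sub>R \<phi> u) has_vector_derivative x *\<^sub>R \<phi>' x + 1 *\<^sub>R \<phi> x) (at x within {0..b})"
        by (rule has_vector_derivative_at_within)
    qed (use b in auto)
    then have "((\<lambda>u. u *\<^sub>R \<phi>' u + \<phi> u) has_integral 0) {0..b}"
      using gb by (simp add: \<phi>_def)
    from has_integral_diff[OF this hJ] show ?thesis by simp
  qed
  define C where "C = 9 * Bd * b + 32 * Bg * (b + 1)"
  show ?thesis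
  proof (intro exI allI impI)
    fix L :: real assume L: "L \<ge> 1"
    define K where "K = nat \<lfloor>exp (b*L)\<rfloor>"
    define S where "S = {2..K}"
    define t where "t n = ln (real n) / L" for n :: nat
    define c where "c n = mangoldt n / real n" for n :: nat
    have bL: "b * L \<ge> 0" using b L by simp
    have K1: "K \<ge> 1" unfolding K_def using bL by (simp add: nat_le_floor_iff)
    have Kle: "real K \<le> exp (b*L)" unfolding K_def using bL by simp
    have lnK: "ln (real K) \<le> b * L"
      using Kle K1 by (subst ln_le_iff_le_exp) (auto simp del: exp_le_cancel_iff)
    have tS: "0 \<le> t n \<and> t n \<le> b" if n: "n \<in> S" for n
    proof -
      have n2: "real n \<ge> 2" "n \<le> K" using n unfolding S_def by auto
      have "ln (real n) \<le> ln (real K)" using n2 by simp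
      then have "ln (real n) \<le> b * L" using lnK by linarith
      then show ?thesis unfolding t_def using L n2 by (auto simp: field_simps)
    qed
    define Cf where "Cf u = (\<Sum>n\<in>S. if t n \<le> u then c n else 0)" for u
    have ftc: "((\<lambda>u. Cf u *\<^sub>R \<phi>' u) has_integral - (\<Sum>n\<in>S. c n *\<^sub>R \<phi> (t n))) {0..b}"
      unfolding Cf_def using tS b gb
      by (intro ftc_trick[where \<phi> = \<phi>]) (auto simp: S_def d\<phi> \<phi>_def)
    have Cf_eq: "Cf u = mert (nat \<lfloor>exp (L*u)\<rfloor>)" if u: "u \<in> {0..b}" for u
    proof -
      have Lu: "L * u \<ge> 0" "L * u \<le> b * L" using u L by (auto simp: mult.commute mult_left_mono)
      have "{n\<in>S. t n \<le> u} = {2..nat \<lfloor>exp (L*u)\<rfloor>}"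
      proof (intro set_eqI iffI)
        fix n assume n: "n \<in> {n\<in>S. t n \<le> u}"
        then have "real n \<ge> 2" "ln (real n) \<le> L * u" unfolding S_def t_def using L by (auto simp: field_simps)
        then have "real n \<le> exp (L*u)" by (simp add: ln_le_iff_le_exp)
        then show "n \<in> {2..nat \<lfloor>exp (L*u)\<rfloor>}" using n Lu unfolding S_def by (auto simp: nat_le_floor_iff)
      next
        fix n assume n: "n \<in> {2..nat \<lfloor>exp (L*u)\<rfloor>}"
        then have n2: "real n \<ge> 2" "real n \<le> exp (L*u)" by (auto simp: nat_le_floor_iff)
        then have "ln (real n) \<le> L * u" by (simp add: ln_le_iff_le_exp)
        then have "t n \<le> u" unfolding t_def using L by (auto simp: field_simps)
        moreover have "real n \<le> exp (b*L)" using n2 Lu by (meson exp_le_cancel_iff order_trans)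
        ultimately show "n \<in> {n\<in>S. t n \<le> u}" using n2 unfolding S_def K_def
          by (auto simp: nat_le_floor_iff)
      qed
      moreover have "Cf u = (\<Sum>n\<in>{n\<in>S. t n \<le> u}. c n)"
        unfolding Cf_def S_def by (rule sum.inter_filter[symmetric]) simp
      ultimately have "Cf u = (\<Sum>n\<in>{2..nat \<lfloor>exp (L*u)\<rfloor>}. c n)" by simp
      then show ?thesis by (simp add: mert_from2 c_def)
    qed
    have Cf_bound: "\<bar>Cf u - L * u\<bar> \<le> 9" if u: "u \<in> {0..b}" for u
      using mert_real[of "exp (L*u)"] Cf_eq[OF u] u L by simp
    have err: "((\<lambda>u. (Cf u - L * u) *\<^sub>R \<phi>' u) has_integral
                 (L *\<^sub>R J - (\<Sum>n\<in>S. c n *\<^sub>R \<phi> (t n)))) {0..b}"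
    proof -
      have "((\<lambda>u. Cf u *\<^sub>R \<phi>' u - L *\<^sub>R (u *\<^sub>R \<phi>' u)) has_integral
              (- (\<Sum>n\<in>S. c n *\<^sub>R \<phi> (t n)) - L *\<^sub>R (- J))) {0..b}"
        by (intro has_integral_diff ftc has_integral_cmul parts)
      then show ?thesis by (simp add: scaleR_diff_left algebra_simps)
    qed
    have errb: "norm (L *\<^sub>R J - (\<Sum>n\<in>S. c n *\<^sub>R \<phi> (t n))) \<le> 9 * Bd * b"
    proof -
      have "norm (L *\<^sub>R J - (\<Sum>n\<in>S. c n *\<^sub>R \<phi> (t n))) \<le> (9 * Bd) * Henstock_Kurzweil_Integration.content {0..b}"
      proof (rule has_integral_bound_real[OF _ _ err])
        fix u assume u: "u \<in> {0..b} - {}"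
        have "norm ((Cf u - L * u) *\<^sub>R \<phi>' u) = \<bar>Cf u - L * u\<bar> * norm (\<phi>' u)" by simp
        also have "\<dots> \<le> 9 * Bd" using Cf_bound[of u] Bd(2)[of u] u by (intro mult_mono) auto
        finally show "norm ((Cf u - L * u) *\<^sub>R \<phi>' u) \<le> 9 * Bd" .
      qed (use Bd in auto)
      then show ?thesis using b by simp
    qed
    have sum_eq: "(\<Sum>n\<in>S. (mangoldt n ^ 2 / real n) *\<^sub>R g (t n))
        = L *\<^sub>R (\<Sum>n\<in>S. c n *\<^sub>R \<phi> (t n)) - (\<Sum>n\<in>S. pp n *\<^sub>R g (t n))"
    proof -
      have "(mangoldt n ^ 2 / real n) *\<^sub>R g (t n) = L *\<^sub>R (c n *\<^sub>R \<phi> (t n)) - pp n *\<^sub>R g (t n)" for n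
      proof -
        have "L * (c n * t n) = mangoldt n * ln (real n) / real n" using L by (simp add: c_def t_def)
        moreover have "mangoldt n ^ 2 / real n = mangoldt n * ln (real n) / real n - pp n"
          by (simp add: pp_def power2_eq_square diff_divide_distrib algebra_simps)
        ultimately show ?thesis by (simp add: \<phi>_def scaleR_diff_left)
      qed
      then show ?thesis by (simp add: sum_subtractf scaleR_sum_right)
    qed
    have ppb: "norm (\<Sum>n\<in>S. pp n *\<^sub>R g (t n)) \<le> Bg * (32 * (b * L + 1))"
    proof -
      have "norm (\<Sum>n\<in>S. pp n *\<^sub>R g (t n)) \<le> (\<Sum>n\<in>S. pp n * Bg)"
      proof (rule order.trans[OF norm_sum sum_mono])
        fix n assume n: "n \<in> S"
        show "norm (pp n *\<^sub>R g (t n)) \<le> pp n * Bg"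
          using Bg(2)[of "t n"] tS[OF n] pp_nonneg[of n] by (simp add: mult_left_mono)
      qed
      also have "\<dots> = Bg * (\<Sum>n\<in>S. pp n)" by (simp add: sum_distrib_left mult.commute)
      also have "(\<Sum>n\<in>S. pp n) \<le> (\<Sum>n=1..K. pp n)"
        unfolding S_def by (intro sum_mono2) (auto simp: pp_nonneg)
      also have "\<dots> \<le> 32 * (ln (real K) + 1)" by (rule pp_sum_bound[OF K1])
      also have "\<dots> \<le> 32 * (b * L + 1)" using lnK by simp
      finally show ?thesis using Bg by (simp add: mult_left_mono)
    qed
    have "(\<Sum>n=2..nat \<lfloor>exp (b*L)\<rfloor>. (mangoldt n ^ 2 / real n) *\<^sub>R g (ln (real n) / L))
            - L^2 *\<^sub>R integral {0..b} (\<lambda>u. u *\<^sub>R g u)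
          = - (L *\<^sub>R (L *\<^sub>R J - (\<Sum>n\<in>S. c n *\<^sub>R \<phi> (t n)))) - (\<Sum>n\<in>S. pp n *\<^sub>R g (t n))"
      using sum_eq unfolding S_def K_def t_def J_def \<phi>_def[abs_def]
      by (simp add: power2_eq_square algebra_simps)
    also have "norm \<dots> \<le> L * (9 * Bd * b) + Bg * (32 * (b * L + 1))"
      using errb ppb L by (intro order.trans[OF norm_triangle_ineq4] add_mono) (auto intro: mult_left_mono)
    also have "\<dots> \<le> C * L"
      unfolding C_def using L Bg b by (simp add: algebra_simps)
    finally show "norm ((\<Sum>n=2..nat \<lfloor>exp (b*L)\<rfloor>. (mangoldt n ^ 2 / real n) *\<^sub>R g (ln (real n) / L))
            - L^2 *\<^sub>R integral {0..b} (\<lambda>u. u *\<^sub>R g u)) \<le> C * L" .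
  qed
qed



lemma fourier_even:
  assumes "\<And>x. f (- x) = f x"
  shows "fourier f (- u) = fourier f u"
proof -
  have "fourier f (- u) = (LINT x|lborel. complex_of_real (f x) * cis (- 2 * pi * x * (- u)))"
    by (simp add: fourier_def)
  also have "\<dots> = \<bar>- 1\<bar> *\<^sub>R (LINT x|lborel. complex_of_real (f (0 + (-1) * x)) * cis (- 2 * pi * (0 + (-1) * x) * (- u)))"
    by (rule lborel_integral_real_affine) simp
  also have "\<dots> = fourier f u"
    by (simp add: fourier_def assms)
  finally show ?thesis .
qed

lemma avg_cis:
  fixes w :: "real \<Rightarrow> real"
  assumes H: "H > 0"
  shows "(LINT \<tau>|lborel. cis (\<tau> * y) * complex_of_real (w ((\<tau> - T) / H) / H))
       = cis (T * y) * fourier w (- H * y / (2 * pi))"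
proof -
  have "(LINT \<tau>|lborel. cis (\<tau> * y) * complex_of_real (w ((\<tau> - T) / H) / H))
      = \<bar>H\<bar> *\<^sub>R (LINT s|lborel. cis ((T + H * s) * y) * complex_of_real (w ((T + H * s - T) / H) / H))"
    using H by (intro lborel_integral_real_affine) simp
  also have "\<dots> = H *\<^sub>R (LINT s|lborel. (cis (T * y) / complex_of_real H) *
        (complex_of_real (w s) * cis (- 2 * pi * s * (- H * y / (2 * pi)))))"
  proof -
    have "cis ((T + H * s) * y) * complex_of_real (w ((T + H * s - T) / H) / H) =
          (cis (T * y) / complex_of_real H) * (complex_of_real (w s) * cis (- 2 * pi * s * (- H * y / (2 * pi))))" for s
    proof -
      have "(T + H * s - T) / H = s" using H by simp
      moreover have "(T + H * s) * y = T * y + (- 2 * pi * s * (- H * y / (2 * pi)))"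
        by (simp add: field_simps)
      ultimately show ?thesis by (simp add: cis_mult[symmetric] field_simps)
    qed
    then show ?thesis using H by (simp only: abs_of_pos)
  qed
  also have "\<dots> = H *\<^sub>R ((cis (T * y) / complex_of_real H) * fourier w (- H * y / (2 * pi)))"
    by (simp only: integral_mult_right_zero fourier_def)
  also have "\<dots> = cis (T * y) * fourier w (- H * y / (2 * pi))"
    using H by (simp add: scaleR_conv_of_real field_simps)
  finally show ?thesis .
qed

lemma integrable_avg:
  fixes w :: "real \<Rightarrow> real" and W :: "real \<Rightarrow> complex"
  assumes H: "H > 0" and w: "integrable lborel w" "\<And>x. w x \<ge> 0"
    and W: "continuous_on UNIV W" "\<And>x. norm (W x) \<le> K"
  shows "integrable lborel (\<lambda>\<tau>. W \<tau> * complex_of_real (w ((\<tau> - T) / H) / H))"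
proof -
  have "integrable lborel (\<lambda>x. w (- T / H + (1 / H) * x))"
    using H by (intro lborel_integrable_real_affine w) simp
  moreover have "(\<lambda>x. w (- T / H + (1 / H) * x)) = (\<lambda>x. w ((x - T) / H))"
    by (rule ext) (simp add: diff_divide_distrib)
  ultimately have i1: "integrable lborel (\<lambda>x. w ((x - T) / H))" by simp
  then have i2: "integrable lborel (\<lambda>x. K * (w ((x - T) / H) / H))"
    by (intro integrable_mult_right integrable_divide)
  show ?thesis
  proof (rule Bochner_Integration.integrable_bound[OF i2])
    have "W \<in> borel_measurable lborel"
      using borel_measurable_continuous_onI[OF W(1)] by simp
    moreover have "(\<lambda>x. w ((x - T) / H)) \<in> borel_measurable lborel"
      using i1 by (rule borel_measurable_integrable)
    ultimately show "(\<lambda>\<tau>. W \<tau> * complex_of_real (w ((\<tau> - T) / H) / H)) \<in> borel_measurable lborel"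
      by measurable
    show "AE x in lborel. norm (W x * complex_of_real (w ((x - T) / H) / H)) \<le> norm (K * (w ((x - T) / H) / H))"
    proof (intro AE_I2)
      fix x
      have "norm (W x * complex_of_real (w ((x - T) / H) / H)) = norm (W x) * (w ((x - T) / H) / H)"
        using H w(2)[of "(x - T) / H"] by (simp only: norm_mult norm_of_real abs_of_nonneg divide_nonneg_pos)
      also have "\<dots> \<le> K * (w ((x - T) / H) / H)"
        using W(2)[of x] H w(2)[of "(x - T) / H"] by (intro mult_right_mono) auto
      also have "\<dots> \<le> norm (K * (w ((x - T) / H) / H))" unfolding real_norm_def by (rule abs_ge_self)
      finally show "norm (W x * complex_of_real (w ((x - T) / H) / H)) \<le> norm (K * (w ((x - T) / H) / H))" .
    qed
  qed
qed

lemma wavg_sq_diag: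
  fixes w :: "real \<Rightarrow> real" and A :: "nat \<Rightarrow> complex" and l :: "nat \<Rightarrow> real"
  assumes H: "H > 0" and w: "integrable lborel w" "\<And>x. w x \<ge> 0" and w0: "fourier w 0 = 1"
    and fin: "finite S"
    and van: "\<And>m n. m \<in> S \<Longrightarrow> n \<in> S \<Longrightarrow> fourier w (- H * (l m + l n) / (2 * pi)) = 0
               \<and> fourier w (- H * (- (l m + l n)) / (2 * pi)) = 0
               \<and> (m \<noteq> n \<longrightarrow> fourier w (- H * (l m - l n) / (2 * pi)) = 0)"
  shows "wavg w (\<lambda>\<tau>. (\<Sum>n\<in>S. A n * (cis (\<tau> * l n) + cis (- \<tau> * l n)))\<^sup>2) T H = 2 * (\<Sum>n\<in>S. A n ^ 2)"
proof -
  define \<rho> where "\<rho> \<tau> = complex_of_real (w ((\<tau> - T) / H) / H)" for \<tau>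
  define I where "I y = (LINT \<tau>|lborel. cis (\<tau> * y) * \<rho> \<tau>)" for y
  have Ieq: "I y = cis (T * y) * fourier w (- H * y / (2 * pi))" for y
    unfolding I_def \<rho>_def by (rule avg_cis[OF H])
  have Iint: "integrable lborel (\<lambda>\<tau>. cis (\<tau> * y) * \<rho> \<tau>)" for y
    unfolding \<rho>_def by (rule integrable_avg[OF H w, where K = 1]) (auto intro!: continuous_intros)
  define E where "E m n \<tau> = cis (\<tau> * (l m + l n)) * \<rho> \<tau> + cis (\<tau> * (l m - l n)) * \<rho> \<tau>
        + cis (\<tau> * (l n - l m)) * \<rho> \<tau> + cis (\<tau> * (- (l m + l n))) * \<rho> \<tau>" for m n \<tau>
  have Eint: "integrable lborel (E m n)" for m n
    unfolding E_def by (intro Bochner_Integration.integrable_add Iint)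
  have EI: "(LINT \<tau>|lborel. E m n \<tau>) = I (l m + l n) + I (l m - l n) + I (l n - l m) + I (- (l m + l n))" for m n
    unfolding E_def I_def by (simp add: Iint)
  have pt: "(\<Sum>n\<in>S. A n * (cis (\<tau> * l n) + cis (- \<tau> * l n)))\<^sup>2 * \<rho> \<tau>
      = (\<Sum>m\<in>S. \<Sum>n\<in>S. A m * A n * E m n \<tau>)" for \<tau>
  proof -
    have c: "(cis (\<tau> * l m) + cis (- \<tau> * l m)) * (cis (\<tau> * l n) + cis (- \<tau> * l n)) * \<rho> \<tau> = E m n \<tau>" for m n
    proof -
      have "(cis (\<tau> * l m) + cis (- \<tau> * l m)) * (cis (\<tau> * l n) + cis (- \<tau> * l n))
          = cis (\<tau> * l m + \<tau> * l n) + cis (\<tau> * l m + - \<tau> * l n) + cis (- \<tau> * l m + \<tau> * l n) + cis (- \<tau> * l m + - \<tau> * l n)"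
        by (simp only: distrib_left distrib_right cis_mult add.assoc) (simp only: add.left_commute)
      also have "\<dots> = cis (\<tau> * (l m + l n)) + cis (\<tau> * (l m - l n)) + cis (\<tau> * (l n - l m)) + cis (\<tau> * (- (l m + l n)))"
        by (simp add: algebra_simps)
      finally show ?thesis unfolding E_def by (simp add: algebra_simps)
    qed
    have "(\<Sum>n\<in>S. A n * (cis (\<tau> * l n) + cis (- \<tau> * l n)))\<^sup>2 * \<rho> \<tau>
        = (\<Sum>m\<in>S. \<Sum>n\<in>S. (A m * (cis (\<tau> * l m) + cis (- \<tau> * l m))) * (A n * (cis (\<tau> * l n) + cis (- \<tau> * l n)))) * \<rho> \<tau>"
      by (simp only: power2_eq_square sum_product)
    also have "\<dots> = (\<Sum>m\<in>S. \<Sum>n\<in>S. (A m * (cis (\<tau> * l m) + cis (- \<tau> * l m))) * (A n * (cis (\<tau> * l n) + cis (- \<tau> * l n))) * \<rho> \<tau>)"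
      by (simp only: sum_distrib_right)
    also have "\<dots> = (\<Sum>m\<in>S. \<Sum>n\<in>S. A m * A n * E m n \<tau>)"
      by (intro sum.cong refl) (simp add: c[symmetric] algebra_simps)
    finally show ?thesis .
  qed
  have val: "I (l m + l n) + I (l m - l n) + I (l n - l m) + I (- (l m + l n)) = (if m = n then 2 else 0)"
    if mn: "m \<in> S" "n \<in> S" for m n
  proof -
    have a: "I (l m + l n) = 0" "I (- (l m + l n)) = 0" using van[OF mn] by (simp_all add: Ieq)
    show ?thesis
    proof (cases "m = n")
      case True
      then show ?thesis using a w0 by (simp add: Ieq)
    next
      case False
      have "I (l m - l n) = 0" using van[OF mn] False by (simp add: Ieq)
      moreover have "I (l n - l m) = 0" using van[OF mn(2,1)] False by (simp add: Ieq)
      ultimately show ?thesis using a False by simp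
    qed
  qed
  have "wavg w (\<lambda>\<tau>. (\<Sum>n\<in>S. A n * (cis (\<tau> * l n) + cis (- \<tau> * l n)))\<^sup>2) T H
      = (LINT \<tau>|lborel. (\<Sum>m\<in>S. \<Sum>n\<in>S. A m * A n * E m n \<tau>))"
    unfolding wavg_def \<rho>_def[symmetric] pt by simp
  also have "\<dots> = (\<Sum>m\<in>S. \<Sum>n\<in>S. A m * A n * (LINT \<tau>|lborel. E m n \<tau>))"
    by (simp add: Bochner_Integration.integral_sum Bochner_Integration.integrable_sum Eint)
  also have "\<dots> = (\<Sum>m\<in>S. \<Sum>n\<in>S. if m = n then 2 * A m ^ 2 else 0)"
  proof (intro sum.cong refl)
    fix m n assume mn: "m \<in> S" "n \<in> S"
    show "A m * A n * (LINT \<tau>|lborel. E m n \<tau>) = (if m = n then 2 * A m ^ 2 else 0)"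
      unfolding EI val[OF mn] by (simp add: power2_eq_square)
  qed
  also have "\<dots> = 2 * (\<Sum>n\<in>S. A n ^ 2)"
    using fin by (simp add: sum.delta sum_distrib_left)
  finally show ?thesis .
qed

lemma fsupp_zero: "u \<notin> fsupp h \<Longrightarrow> h u = 0"
proof (rule ccontr)
  assume u: "u \<notin> fsupp h" and "h u \<noteq> 0"
  then have "u \<in> {u. h u \<noteq> 0}" by simp
  then have "u \<in> closure {u. h u \<noteq> 0}" by (rule subsetD[OF closure_subset])
  then show False using u unfolding fsupp_def by simp
qed

lemma supp_strict:
  assumes "compact (fsupp h)" "fsupp h \<subseteq> {- a<..<a}" "a > 0"
  obtains a' where "0 < a'" "a' < a" "\<And>u. a' \<le> \<bar>u\<bar> \<Longrightarrow> h u = 0"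
proof (cases "fsupp h = {}")
  case True
  then show ?thesis using that[of "a/2"] assms(3) fsupp_zero[of _ h] by auto
next
  case False
  have "compact (abs ` fsupp h)"
    by (intro compact_continuous_image assms(1) continuous_intros)
  moreover have "abs ` fsupp h \<noteq> {}" using False by auto
  ultimately obtain s where s: "s \<in> abs ` fsupp h" "\<And>t. t \<in> abs ` fsupp h \<Longrightarrow> t \<le> s"
    using compact_attains_sup by metis
  obtain x where x: "x \<in> fsupp h" "s = \<bar>x\<bar>" using s(1) by auto
  then have "x \<in> {- a<..<a}" using assms(2) by blast
  then have sa: "0 \<le> s" "s < a" using x by auto
  show ?thesis
  proof (rule that[of "(s + a) / 2"])
    show "0 < (s + a) / 2" "(s + a) / 2 < a" using sa by auto
    fix u :: real assume u: "(s + a) / 2 \<le> \<bar>u\<bar>"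
    have "u \<notin> fsupp h"
    proof
      assume "u \<in> fsupp h"
      then have "\<bar>u\<bar> \<le> s" using s(2) by auto
      then show False using u sa by auto
    qed
    then show "h u = 0" by (rule fsupp_zero)
  qed
qed

lemma supp_R:
  assumes "compact (fsupp h)"
  obtains R where "R > 0" "\<And>u. \<bar>u\<bar> > R \<Longrightarrow> h u = 0"
proof -
  have "bounded (fsupp h)" using assms by (rule compact_imp_bounded)
  then obtain R where R: "R > 0" "\<And>x. x \<in> fsupp h \<Longrightarrow> norm x \<le> R" unfolding bounded_pos by auto
  show ?thesis
  proof (rule that[OF R(1)])
    fix u :: real assume "\<bar>u\<bar> > R"
    then have "u \<notin> fsupp h" using R(2)[of u] by auto
    then show "h u = 0" by (rule fsupp_zero)
  qed
qed

lemma smooth_deriv: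
  assumes "smooth_fun F"
  obtains F1 where "\<And>x. (F has_vector_derivative F1 x) (at x)" "continuous_on UNIV F1"
proof -
  obtain D where D: "D 0 = F" "\<And>k x. (D k has_vector_derivative D (Suc k) x) (at x)"
    using assms unfolding smooth_fun_def by blast
  show ?thesis
  proof (rule that[of "D 1"])
    fix x show "(F has_vector_derivative D 1 x) (at x)" using D(2)[of 0 x] D(1) by simp
  next
    show "continuous_on UNIV (D 1)"
    proof (intro continuous_at_imp_continuous_on ballI)
      fix x :: real
      show "isCont (D 1) x" using D(2)[of 1 x] by (rule has_vector_derivative_continuous)
    qed
  qed
qed

lemma ln_ge_one_minus_inv: "x > 0 \<Longrightarrow> 1 - 1 / x \<le> ln (x::real)"
  using ln_le_minus_one[of "1 / x"] by (simp add: ln_div)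

lemma log_gap:
  assumes "1 \<le> n" "n < m" "real n \<le> X"
  shows "1 / (2 * X) \<le> ln (real m) - ln (real n)"
proof -
  have n0: "real n \<ge> 1" using assms by simp
  have "ln (real (n + 1)) \<le> ln (real m)" using assms by simp
  moreover have "ln (real (n+1)) - ln (real n) = ln ((real n + 1) / real n)"
    using n0 by (simp add: ln_div)
  moreover have "1 - 1 / ((real n + 1) / real n) \<le> ln ((real n + 1) / real n)"
    using n0 by (intro ln_ge_one_minus_inv) auto
  moreover have "1 - 1 / ((real n + 1) / real n) = 1 / (real n + 1)" using n0 by (simp add: field_simps)
  moreover have "1 / (2 * X) \<le> 1 / (real n + 1)" using n0 assms(3) by (intro divide_left_mono) auto
  ultimately show ?thesis by linarith
qed

lemma TI_lemma:
  fixes g :: "real \<Rightarrow> complex"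
  assumes cg: "continuous_on UNIV g" and ev: "\<And>u. g (- u) = g u"
    and b: "0 < b" "b \<le> 1" and z: "\<And>u. b \<le> \<bar>u\<bar> \<Longrightarrow> g u = 0"
  shows "(LINT u|lborel. complex_of_real (min \<bar>u\<bar> 1) * g u) = 2 * integral {0..b} (\<lambda>u. u *\<^sub>R g u)"
proof -
  define k where "k u = complex_of_real (min \<bar>u\<bar> 1) * g u" for u
  have kc: "continuous_on {-b..b} k" unfolding k_def
    by (intro continuous_intros continuous_on_subset[OF cg]) auto
  have keq: "k u = indicator {-b..b} u *\<^sub>R k u" for u
    using z[of u] by (cases "u \<in> {-b..b}") (auto simp: k_def indicator_def abs_if split: if_splits)
  have "integrable lborel (\<lambda>u. indicator {-b..b} u *\<^sub>R k u)"
    by (rule borel_integrable_compact[OF compact_Icc kc])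
  then have "integrable lborel k" using keq by simp
  then have "(k has_integral (LINT u|lborel. k u)) UNIV" by (rule has_integral_integral_lborel)
  moreover have "k = (\<lambda>u. if u \<in> {-b..b} then k u else 0)"
    by (rule ext) (subst keq, simp add: indicator_def)
  ultimately have "((\<lambda>u. if u \<in> {-b..b} then k u else 0) has_integral (LINT u|lborel. k u)) UNIV" by simp
  then have hk: "(k has_integral (LINT u|lborel. k u)) {-b..b}" by (simp only: has_integral_restrict_UNIV)
  then have ik: "k integrable_on {-b..b}" by blast
  have "(LINT u|lborel. k u) = integral {-b..b} k" using hk by (simp add: integral_unique)
  also have "\<dots> = integral {-b..0} k + integral {0..b} k"
    using ik b by (intro Henstock_Kurzweil_Integration.integral_combine[symmetric]) auto
  also have "integral {0..b} k = integral {0..b} (\<lambda>u. u *\<^sub>R g u)"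
    using b by (intro integral_cong) (auto simp: k_def scaleR_conv_of_real)
  also have "integral {-b..0} k = integral {-b..0} (\<lambda>u. (- u) *\<^sub>R g (- u))"
    using b by (intro integral_cong) (auto simp: k_def scaleR_conv_of_real ev)
  also have "\<dots> = integral {0..b} (\<lambda>u. u *\<^sub>R g u)"
    using Henstock_Kurzweil_Integration.integral_reflect_real[of b 0 "\<lambda>v. v *\<^sub>R g v"] by simp
  finally show ?thesis by (simp add: k_def)
qed



theorem proposition6:
  fixes a :: real and f w :: "real \<Rightarrow> real"
  assumes "0 < a" "a \<le> 1"
    and "integrable lborel f" "\<And>x. f (- x) = f x"
    and "smooth_fun (fourier f)" "compact (fsupp (fourier f))"
    and "fsupp (fourier f) \<subseteq> {- a<..<a}"
    and "\<And>x. w x \<ge> 0" "integrable lborel w" "(LINT x|lborel. w x) = 1"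
    and "compact (fsupp (fourier w))"
  shows "(\<lambda>T. wavg w (\<lambda>\<tau>. (N_osc f T \<tau>)\<^sup>2) T (T powr a)
            - (LINT u|lborel. complex_of_real (min \<bar>u\<bar> 1) * (fourier f u)\<^sup>2))
         \<in> O[at_top](\<lambda>T. complex_of_real (1 / ln T))"
proof -
  obtain F1 where dF: "\<And>x. (fourier f has_vector_derivative F1 x) (at x)" and cF1: "continuous_on UNIV F1"
    using smooth_deriv[OF assms(5)] by blast
  obtain a' where a': "0 < a'" "a' < a" "\<And>u. a' \<le> \<bar>u\<bar> \<Longrightarrow> fourier f u = 0"
    using supp_strict[OF assms(6) assms(7) assms(1)] by blast
  obtain R where R: "R > 0" "\<And>u. \<bar>u\<bar> > R \<Longrightarrow> fourier w u = 0"
    using supp_R[OF assms(11)] by blast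
  define g where "g u = (fourier f u)\<^sup>2" for u
  define g' where "g' u = fourier f u * F1 u + F1 u * fourier f u" for u
  have dg: "(g has_vector_derivative g' x) (at x)" for x
    unfolding g_def[abs_def] g'_def power2_eq_square by (rule has_vector_derivative_mult[OF dF dF])
  have cF: "continuous_on UNIV (fourier f)"
  proof (intro continuous_at_imp_continuous_on ballI)
    fix x :: real show "isCont (fourier f) x" using dF[of x] by (rule has_vector_derivative_continuous)
  qed
  have cg: "continuous_on UNIV g" unfolding g_def[abs_def] using cF by (intro continuous_intros)
  have "continuous_on UNIV g'" unfolding g'_def[abs_def]
    using cF cF1 by (intro continuous_intros)
  then have cg': "continuous_on {0..a'} g'" by (rule continuous_on_subset) simp
  have ga: "g a' = 0" using a'(3)[of a'] a'(1) by (simp add: g_def)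
  define J where "J = integral {0..a'} (\<lambda>u. u *\<^sub>R g u)"
  obtain C where C: "\<And>L. L \<ge> 1 \<Longrightarrow> norm ((\<Sum>n=2..nat \<lfloor>exp (a'*L)\<rfloor>. (mangoldt n ^ 2 / real n) *\<^sub>R g (ln (real n) / L))
            - L^2 *\<^sub>R J) \<le> C * L"
    using nt_main[OF a'(1) dg cg' ga] unfolding J_def by blast
  have Fev: "fourier f (- u) = fourier f u" for u using fourier_even assms(4) by blast
  have TI: "(LINT u|lborel. complex_of_real (min \<bar>u\<bar> 1) * (fourier f u)\<^sup>2) = 2 * J"
    unfolding J_def g_def[symmetric]
    by (rule TI_lemma[OF cg]) (use Fev a' assms(2) in \<open>auto simp: g_def\<close>)
  have w0: "fourier w 0 = 1"
    by (simp add: fourier_def integral_complex_of_real assms(10))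
  have aa: "a - a' > 0" using a' by simp
  define T0 where "T0 = max (exp 1) ((4*pi*R + 1) powr (1/(a - a')))"
  show ?thesis
  proof (rule bigoI[where c = "2 * C"], rule eventually_at_top_linorderI[of T0])
    fix T assume T: "T0 \<le> T"
    define L where "L = ln T"
    define H where "H = T powr a"
    have Te: "T \<ge> exp 1" using T unfolding T0_def by simp
    have "1 < exp (1::real)" by simp
    then have T1: "T > 1" using Te by linarith
    have "ln (exp 1) \<le> ln T" using Te T1 by (subst ln_le_cancel_iff) auto
    then have L1: "L \<ge> 1" unfolding L_def by simp
    have Hpos: "H > 0" unfolding H_def using T1 by simp
    have "((4*pi*R + 1) powr (1/(a - a'))) powr (a - a') \<le> T powr (a - a')"
      using T aa unfolding T0_def by (intro powr_mono2) auto
    moreover have "((4*pi*R + 1) powr (1/(a - a'))) powr (a - a') = 4*pi*R + 1"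
      using aa R(1) by (simp add: powr_powr)
    ultimately have big: "T powr (a - a') \<ge> 4*pi*R + 1" by simp
    define X where "X = exp (a' * L)"
    have XT: "X = T powr a'" unfolding X_def L_def powr_def using T1 by simp
    have X1: "X \<ge> 1" unfolding X_def using a' L1 by simp
    have HX: "H / X = T powr (a - a')" unfolding H_def XT by (simp add: powr_diff)
    have vanish: "fourier w (- H * y / (2 * pi)) = 0" if y: "1 / (2 * X) \<le> \<bar>y\<bar>" for y
    proof (rule R(2))
      have "\<bar>- H * y / (2 * pi)\<bar> = H * \<bar>y\<bar> / (2 * pi)" using Hpos by (simp add: abs_mult)
      also have "\<dots> \<ge> H * (1 / (2 * X)) / (2 * pi)"
        using y Hpos by (intro divide_right_mono mult_left_mono) auto
      finally have "\<bar>- H * y / (2 * pi)\<bar> \<ge> (H / X) / (4 * pi)" by (simp add: field_simps)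
      moreover have "(H / X) / (4 * pi) > R"
        using big HX R(1) by (simp add: field_simps)
      ultimately show "\<bar>- H * y / (2 * pi)\<bar> > R" by linarith
    qed
    define K where "K = nat \<lfloor>exp (a'*L)\<rfloor>"
    define S where "S = {2..K}"
    define A where "A n = complex_of_real (mangoldt n / sqrt (real n)) * fourier f (ln (real n) / L)" for n
    have L0: "L > 0" using L1 by simp
    have inS: "real n \<le> X" "2 \<le> n" if "n \<in> S" for n
      using that unfolding S_def K_def X_def by (auto simp: nat_le_floor_iff)
    have Nexp: "N_osc f T \<tau> = - complex_of_real (1 / L) * (\<Sum>n\<in>S. A n * (cis (\<tau> * ln (real n)) + cis (- \<tau> * ln (real n))))" for \<tau>
    proof -
      have "(\<Sum>n. if n \<ge> 2 then complex_of_real (mangoldt n / sqrt (real n))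
            * fourier f (ln (real n) / ln T)
            * (cis (\<tau> * ln (real n)) + cis (- \<tau> * ln (real n))) else 0)
          = (\<Sum>n\<in>S. if n \<ge> 2 then complex_of_real (mangoldt n / sqrt (real n))
            * fourier f (ln (real n) / ln T)
            * (cis (\<tau> * ln (real n)) + cis (- \<tau> * ln (real n))) else 0)"
      proof (rule suminf_finite)
        show "finite S" unfolding S_def by simp
        fix n assume n: "n \<notin> S"
        show "(if n \<ge> 2 then complex_of_real (mangoldt n / sqrt (real n))
            * fourier f (ln (real n) / ln T)
            * (cis (\<tau> * ln (real n)) + cis (- \<tau> * ln (real n))) else 0) = 0"
        proof (cases "n \<ge> 2")
          case True
          then have "n > K" using n unfolding S_def by auto
          then have "\<not> (n \<le> K)" by simp
          then have "\<not> (real n \<le> exp (a' * L))" using nat_le_floor_iff[of "exp (a'*L)" n] unfolding K_def by simp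
          moreover have "real n > 0" using True by simp
          ultimately have "\<not> (ln (real n) \<le> a' * L)" using ln_le_iff_le_exp[of "real n" "a' * L"] by simp
          then have "ln (real n) > a' * L" by simp
          then have "a' \<le> \<bar>ln (real n) / ln T\<bar>" using L0 unfolding L_def by (simp add: field_simps)
          then have "fourier f (ln (real n) / ln T) = 0" by (rule a'(3))
          then show ?thesis by simp
        qed simp
      qed
      also have "\<dots> = (\<Sum>n\<in>S. A n * (cis (\<tau> * ln (real n)) + cis (- \<tau> * ln (real n))))"
        by (intro sum.cong refl) (auto simp: S_def A_def L_def)
      finally show ?thesis unfolding N_osc_def L_def by simp
    qed
    have wavg1: "wavg w (\<lambda>\<tau>. (N_osc f T \<tau>)\<^sup>2) T H =
        complex_of_real (1 / L) ^ 2 * wavg w (\<lambda>\<tau>. (\<Sum>n\<in>S. A n * (cis (\<tau> * ln (real n)) + cis (- \<tau> * ln (real n))))\<^sup>2) T H"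
      unfolding wavg_def Nexp power_mult_distrib
      by (simp add: mult.assoc integral_mult_right_zero)
    have diag: "wavg w (\<lambda>\<tau>. (\<Sum>n\<in>S. A n * (cis (\<tau> * ln (real n)) + cis (- \<tau> * ln (real n))))\<^sup>2) T H
        = 2 * (\<Sum>n\<in>S. A n ^ 2)"
    proof (rule wavg_sq_diag[OF Hpos assms(9) assms(8) w0])
      show "finite S" unfolding S_def by simp
      fix m n assume m: "m \<in> S" and n: "n \<in> S"
      have ln2: "ln (2::real) \<ge> 1/2" using ln_ge_one_minus_inv[of 2] by simp
      have half: "1 / (2 * X) \<le> 1/2" using X1 by simp
      have "ln (real m) \<ge> ln 2" "ln (real n) \<ge> ln 2" using inS[OF m] inS[OF n] by auto
      then have s: "1 / (2 * X) \<le> \<bar>ln (real m) + ln (real n)\<bar>" using ln2 half by linarith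
      have d: "1 / (2 * X) \<le> \<bar>ln (real m) - ln (real n)\<bar>" if "m \<noteq> n"
      proof (cases "n < m")
        case True
        then show ?thesis using log_gap[of n m X] inS[OF n] by simp
      next
        case False
        then have "m < n" using that by simp
        then show ?thesis using log_gap[of m n X] inS[OF m] by simp
      qed
      show "fourier w (- H * (ln (real m) + ln (real n)) / (2 * pi)) = 0 \<and>
          fourier w (- H * - (ln (real m) + ln (real n)) / (2 * pi)) = 0 \<and>
          (m \<noteq> n \<longrightarrow> fourier w (- H * (ln (real m) - ln (real n)) / (2 * pi)) = 0)"
        using vanish[OF s] vanish[of "- (ln (real m) + ln (real n))"] s vanish[OF d] by auto
    qed
    have A2: "A n ^ 2 = (mangoldt n ^ 2 / real n) *\<^sub>R g (ln (real n) / L)" for n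
    proof -
      have "complex_of_real (sqrt (real n)) ^ 2 = complex_of_real (real n)"
        by (simp only: of_real_power[symmetric] real_sqrt_pow2[OF of_nat_0_le_iff])
      then show ?thesis by (simp add: A_def g_def power_mult_distrib power_divide scaleR_conv_of_real)
    qed
    define Sg where "Sg = (\<Sum>n=2..nat \<lfloor>exp (a'*L)\<rfloor>. (mangoldt n ^ 2 / real n) *\<^sub>R g (ln (real n) / L))"
    have SgS: "(\<Sum>n\<in>S. A n ^ 2) = Sg" unfolding Sg_def S_def K_def A2 ..
    have "wavg w (\<lambda>\<tau>. (N_osc f T \<tau>)\<^sup>2) T (T powr a)
            - (LINT u|lborel. complex_of_real (min \<bar>u\<bar> 1) * (fourier f u)\<^sup>2)
          = complex_of_real (1 / L) ^ 2 * (2 * Sg) - 2 * J"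
      unfolding H_def[symmetric] wavg1 diag TI SgS ..
    also have "\<dots> = (2 / L^2) *\<^sub>R (Sg - L^2 *\<^sub>R J)"
      using L0 by (simp add: scaleR_conv_of_real field_simps power2_eq_square)
    finally have eq: "wavg w (\<lambda>\<tau>. (N_osc f T \<tau>)\<^sup>2) T (T powr a)
            - (LINT u|lborel. complex_of_real (min \<bar>u\<bar> 1) * (fourier f u)\<^sup>2) = (2 / L^2) *\<^sub>R (Sg - L^2 *\<^sub>R J)" .
    have "norm ((2 / L^2) *\<^sub>R (Sg - L^2 *\<^sub>R J)) = (2 / L^2) * norm (Sg - L^2 *\<^sub>R J)" by simp
    also have "\<dots> \<le> (2 / L^2) * (C * L)" using C[OF L1] unfolding Sg_def by (intro mult_left_mono) auto
    also have "\<dots> = 2 * C * (1 / L)"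
      using L0 by (simp add: power2_eq_square field_simps)
    also have "1 / L = norm (complex_of_real (1 / ln T))"
      using L0 unfolding L_def by (simp only: norm_of_real abs_of_pos divide_pos_pos zero_less_one)
    finally show "norm (wavg w (\<lambda>\<tau>. (N_osc f T \<tau>)\<^sup>2) T (T powr a)
            - (LINT u|lborel. complex_of_real (min \<bar>u\<bar> 1) * (fourier f u)\<^sup>2)) \<le> 2 * C * norm (complex_of_real (1 / ln T))"
      unfolding eq .
  qed
qed


end
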